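(* Let $k\ge 1$ and $n\ge 1$ be integers, let $\omega=(\omega_1,\omega_2,\ldots)$ be a sequence of integers (the weight vector), let $t_1,\ldots,t_k$ be indeterminates, and set $t_j:=0$ for $j>k$. Define the weighted isobaric polynomial $$P_{\omega,k,n}(t_1,\ldots,t_k)=\sum_{\alpha\vdash n}\binom{|\alpha|}{\alpha_1,\ldots,\alpha_k}\frac{\sum_{j=1}^k\omega_j\alpha_j}{|\alpha|}\,t_1^{\alpha_1}\cdots t_k^{\alpha_k},$$ where the sum runs over all $k$-tuples $\alpha=(\alpha_1,\ldots,\alpha_k)$ of nonnegative integers with $\sum_{j=1}^k j\alpha_j=n$, and $|\alpha|=\alpha_1+\cdots+\alpha_k$. Let $H_{+}$ be the $n\times n$ lower Hessenberg matrix whose entries are: for $1\le i\le n-1$, $(H_+)_{i,j}=t_{i-j+1}$ if $j\le i$, $(H_+)_{i,i+1}=1$, and $(H_+)_{i,j}=0$ if $j>i+1$; and in the last row $(H_+)_{n,j}=\omega_{n-j+1}t_{n-j+1}$ for $1\le j\le n$. That is, $$H_{+}=\begin{pmatrix} t_1&1&0&\cdots&0\\ t_2&t_1&1&\cdots&0\\ \vdots&\vdots&\vdots&\ddots&\vdots\\ t_{n-1}&t_{n-2}&t_{n-3}&\cdots&1\\ \omega_nt_n&\omega_{n-1}t_{n-1}&\omega_{n-2}t_{n-2}&\cdots&\omega_1t_1\end{pmatrix}.$$ Let $H_-$ be the same matrix except that every super-diagonal entry $1$ is replaced by $-1$. Then (a) $\operatorname{perm} H_+ = P_{\omega,k,n}(t_1,\ldots,t_k)$,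 and (b) $\det H_- = P_{\omega,k,n}(t_1,\ldots,t_k)$.
   Context: The permanent of a square matrix $M=(m_{ij})_{1\le i,j\le n}$ is $\operatorname{perm}M=\sum_{\sigma\in S_n}\prod_{i=1}^n m_{i,\sigma(i)}$, i.e. the determinant expansion with all signs taken to be $+$. *)

theory Defs
  imports "Jordan_Normal_Form.Determinant"
begin

definition perm_mat :: "'a mat \<Rightarrow> 'a :: comm_ring_1" where
  "perm_mat A = (\<Sum> p \<in> {p. p permutes {0 ..< dim_row A}}.
     (\<Prod> i = 0 ..< dim_row A. A $$ (i, p i)))"

text \<open>Index set of the sum: k-tuples alpha (stored as nat => nat, zero outside 1..k)
  with sum_j j * alpha_j = n.\<close>
definition isobaric_tuples :: "nat \<Rightarrow> nat \<Rightarrow> (nat \<Rightarrow> nat) set" where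
  "isobaric_tuples k n = {\<alpha>. (\<forall>j. (j < 1 \<or> k < j) \<longrightarrow> \<alpha> j = 0) \<and> (\<Sum>j=1..k. j * \<alpha> j) = n}"

definition weighted_isobaric ::
  "(nat \<Rightarrow> int) \<Rightarrow> nat \<Rightarrow> nat \<Rightarrow> (nat \<Rightarrow> 'a::field_char_0) \<Rightarrow> 'a" where
  "weighted_isobaric \<omega> k n t =
     (\<Sum>\<alpha> \<in> isobaric_tuples k n.
        let a = (\<Sum>j=1..k. \<alpha> j) in
        (of_nat (fact a) / (\<Prod>j=1..k. of_nat (fact (\<alpha> j))))
        * (of_int (\<Sum>j=1..k. \<omega> j * int (\<alpha> j)) / of_nat a)
        * (\<Prod>j=1..k. t j ^ \<alpha> j))"

text \<open>The Hessenberg matrix H with super-diagonal entry s (s = 1 gives H_+, s = -1 gives H_-).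
  Paper indices (i',j') in 1..n correspond to (i+1,j+1).\<close>
definition hess_mat :: "'a::comm_ring_1 \<Rightarrow> (nat \<Rightarrow> int) \<Rightarrow> (nat \<Rightarrow> 'a) \<Rightarrow> nat \<Rightarrow> 'a mat" where
  "hess_mat s \<omega> t n = mat n n (\<lambda>(i, j).
     let i' = i + 1; j' = j + 1 in
     if i' < n then
       (if j' \<le> i' then t (i' - j' + 1) else if j' = i' + 1 then s else 0)
     else of_int (\<omega> (n - j' + 1)) * t (n - j' + 1))"

end

theory Submission imports Defs begin

definition good :: "nat \<Rightarrow> (nat \<Rightarrow> nat) \<Rightarrow> bool" where
  "good n p \<longleftrightarrow> p permutes {0..<n} \<and> (\<forall>i<n. p i \<le> Suc i)"

definition extp :: "nat \<Rightarrow> nat \<Rightarrow> (nat \<Rightarrow> nat) \<Rightarrow> nat \<Rightarrow> nat" where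
  "extp a n q i = (if i < a then q i else if i < n then Suc i else if i = n then a else i)"

definition cyc :: "nat \<Rightarrow> nat \<Rightarrow> nat \<Rightarrow> nat" where
  "cyc a n i = (if a \<le> i \<and> i < n then Suc i else if i = n then a else i)"

lemma cyc_Suc: "a \<le> n \<Longrightarrow> cyc a (Suc n) = cyc a n \<circ> Transposition.transpose n (Suc n)"
  by (rule ext) (auto simp: cyc_def Transposition.transpose_def)

lemma cyc_same: "cyc a a = id"
  by (rule ext) (auto simp: cyc_def id_def)

lemma cyc_props: "a \<le> n \<Longrightarrow> cyc a n permutes {a..n} \<and> sign (cyc a n) = (-1) ^ (n - a)"
proof (induction n)
  case 0
  then have "a = 0" by simp
  then show ?case using cyc_same[of 0] permutes_id[of "{0..0::nat}"] by (simp add: id_def)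
next
  case (Suc n)
  show ?case
  proof (cases "a = Suc n")
    case True
    then show ?thesis using cyc_same[of a] permutes_id[of "{a..a::nat}"] by (simp add: id_def)
  next
    case False
    then have an: "a \<le> n" using Suc by simp
    from Suc.IH[OF an] have ih: "cyc a n permutes {a..n}" "sign (cyc a n) = (-1) ^ (n - a)" by auto
    have p1: "cyc a n permutes {a..Suc n}" by (rule permutes_subset[OF ih(1)]) auto
    have p2: "Transposition.transpose n (Suc n) permutes {a..Suc n}"
      by (rule permutes_swap_id) (use an in auto)
    have "cyc a (Suc n) permutes {a..Suc n}"
      unfolding cyc_Suc[OF an] by (rule permutes_compose[OF p2 p1])
    moreover have "sign (cyc a (Suc n)) = (-1) ^ (Suc n - a)"
      unfolding cyc_Suc[OF an]
      apply (subst sign_compose)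
      using ih(1) p2 permutation_permutes apply blast
      using p2 permutation_permutes apply blast
      using an by (simp add: sign_swap_id ih(2) Suc_diff_le)
    ultimately show ?thesis by simp
  qed
qed

lemma ext_comp: "good a q \<Longrightarrow> a \<le> n \<Longrightarrow> extp a n q = q \<circ> cyc a n"
  by (rule ext) (auto simp: extp_def cyc_def good_def permutes_not_in)

lemma good_ext: assumes "good a q" "a \<le> n" shows "good (Suc n) (extp a n q)"
proof -
  have "q permutes {0..<Suc n}" using assms by (auto simp: good_def intro: permutes_subset)
  moreover have "cyc a n permutes {0..<Suc n}" using cyc_props[OF assms(2)] by (auto intro: permutes_subset)
  ultimately have "extp a n q permutes {0..<Suc n}" unfolding ext_comp[OF assms(1,2)] by (rule permutes_compose[rotated])
  moreover have "\<forall>i<Suc n. extp a n q i \<le> Suc i" using assms by (auto simp: extp_def good_def)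
  ultimately show ?thesis by (simp add: good_def)
qed

lemma sign_ext: assumes "good a q" "a \<le> n" shows "sign (extp a n q) = sign q * (-1) ^ (n - a)"
proof -
  have "permutation q" using assms by (auto simp: good_def permutation_permutes)
  moreover have "permutation (cyc a n)" using cyc_props[OF assms(2)] permutation_permutes by blast
  ultimately show ?thesis unfolding ext_comp[OF assms(1,2)] using cyc_props[OF assms(2)] by (simp add: sign_compose)
qed

lemma mid_lemma:
  assumes pp: "p permutes {0..<Suc n}" and le: "\<And>i. i < Suc n \<Longrightarrow> p i \<le> Suc i"
    and pn: "p n = a" and img: "p ` {0..<a} = {0..<a}"
  shows "a \<le> i \<Longrightarrow> i < n \<Longrightarrow> p i = Suc i"
proof (induction "n - i" arbitrary: i rule: less_induct)
  case less
  have "Suc i \<in> {0..<Suc n}" using less.prems by simp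
  then have "Suc i \<in> p ` {0..<Suc n}" using permutes_image[OF pp] by simp
  then obtain j where j: "j < Suc n" "p j = Suc i" by auto
  have jn: "j \<noteq> n"
  proof
    assume "j = n" then have "Suc i = a" using j pn by simp
    then show False using less.prems by simp
  qed
  have ja: "\<not> j < a"
  proof
    assume "j < a"
    then have "p j \<in> p ` {0..<a}" by simp
    then have "p j \<in> {0..<a}" by (simp only: img)
    then show False using j less.prems by simp
  qed
  have ij: "i \<le> j" using le[OF j(1)] j(2) by simp
  have "\<not> i < j"
  proof
    assume ij: "i < j"
    have "n - j < n - i" using ij jn j(1) by simp
    moreover have "a \<le> j" using ja by simp
    moreover have "j < n" using jn j(1) by simp
    ultimately have "p j = Suc j" by (rule less.hyps)
    then show False using j ij by simp
  qed
  then have "j = i" using ij by simp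
  then show ?case using j by simp
qed

lemma good_struct:
  assumes g: "good (Suc n) p"
  defines "a \<equiv> p n"
  defines "q \<equiv> (\<lambda>i. if i < a then p i else i)"
  shows "a \<le> n \<and> good a q \<and> p = extp a n q"
proof -
  have pp: "p permutes {0..<Suc n}" and le: "\<And>i. i < Suc n \<Longrightarrow> p i \<le> Suc i" using g by (auto simp: good_def)
  have inj: "inj p" using pp by (rule permutes_inj)
  have an: "a \<le> n" using permutes_in_image[OF pp, of n] unfolding a_def by auto
  have sub: "p ` {0..<a} \<subseteq> {0..<a}"
  proof
    fix y assume "y \<in> p ` {0..<a}"
    then obtain i where i: "i < a" "y = p i" by auto
    have "p i \<le> a" using le[of i] i an by auto
    moreover have "p i \<noteq> a" using inj_eq[OF inj, of i n] i an unfolding a_def by auto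
    ultimately show "y \<in> {0..<a}" using i by auto
  qed
  have img: "p ` {0..<a} = {0..<a}"
    by (rule endo_inj_surj[OF _ sub inj_on_subset[OF inj subset_UNIV]]) simp
  have q: "good a q"
  proof -
    have "bij_betw q {0..<a} {0..<a}"
    proof -
      have "bij_betw p {0..<a} {0..<a}" using img inj_on_subset[OF inj subset_UNIV] by (simp add: bij_betw_def)
      then show ?thesis by (rule bij_betw_cong[THEN iffD1, rotated]) (auto simp: q_def)
    qed
    then have "q permutes {0..<a}" by (rule bij_imp_permutes) (auto simp: q_def)
    moreover have "\<forall>i<a. q i \<le> Suc i" using le an by (auto simp: q_def)
    ultimately show ?thesis by (simp add: good_def)
  qed
  have mid: "p i = Suc i" if "a \<le> i" "i < n" for i
    using mid_lemma[OF pp le _ img that(1) that(2)] a_def by simp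
  have "p = extp a n q"
  proof (rule ext)
    fix i show "p i = extp a n q i"
    proof (cases "i < a")
      case True then show ?thesis by (simp add: extp_def q_def)
    next
      case False
      show ?thesis
      proof (cases "i < n")
        case True then show ?thesis using mid[of i] False by (simp add: extp_def)
      next
        case F2: False
        show ?thesis
        proof (cases "i = n")
          case True then show ?thesis using False F2 an by (simp add: extp_def a_def)
        next
          case False
          then have "i \<notin> {0..<Suc n}" using F2 by auto
          then show ?thesis using permutes_not_in[OF pp] False F2 \<open>\<not> i < a\<close> by (simp add: extp_def)
        qed
      qed
    qed
  qed
  with an q show ?thesis by blast
qed


definition gen :: "((nat \<Rightarrow> nat) \<Rightarrow> 'a::comm_ring_1) \<Rightarrow> (nat \<Rightarrow> nat \<Rightarrow> 'a) \<Rightarrow> nat \<Rightarrow> 'a" where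
  "gen c A n = (\<Sum>p\<in>{p. good n p}. c p * (\<Prod>i=0..<n. A i (p i)))"

lemma finite_good: "finite {p. good n p}"
  by (rule finite_subset[OF _ finite_permutations[of "{0..<n}"]]) (auto simp: good_def)

lemma ext_at_n: "a \<le> n \<Longrightarrow> extp a n q n = a"
  by (simp add: extp_def)

lemma bij_ext: "bij_betw (\<lambda>(a,q). extp a n q) (SIGMA a:{..n}. {q. good a q}) {p. good (Suc n) p}"
proof (rule bij_betwI')
  fix x y assume x: "x \<in> (SIGMA a:{..n}. {q. good a q})" and y: "y \<in> (SIGMA a:{..n}. {q. good a q})"
  obtain a q where xa: "x = (a,q)" "a \<le> n" "good a q" using x by auto
  obtain b r where yb: "y = (b,r)" "b \<le> n" "good b r" using y by auto
  show "((case x of (a, q) \<Rightarrow> extp a n q) = (case y of (a, q) \<Rightarrow> extp a n q)) = (x = y)"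
  proof
    assume e: "(case x of (a, q) \<Rightarrow> extp a n q) = (case y of (a, q) \<Rightarrow> extp a n q)"
    then have e2: "extp a n q = extp b n r" using xa yb by simp
    then have ab: "a = b" using ext_at_n[OF xa(2), of q] ext_at_n[OF yb(2), of r] by simp
    have "q = r"
    proof
      fix i show "q i = r i"
      proof (cases "i < a")
        case True then show ?thesis using fun_cong[OF e2, of i] ab by (simp add: extp_def)
      next
        case False then show ?thesis using xa(3) yb(3) ab
            permutes_not_in[of q "{0..<b}" i] permutes_not_in[of r "{0..<b}" i]
          by (simp add: good_def)
      qed
    qed
    then show "x = y" using ab xa yb by simp
  qed simp
next
  fix x assume "x \<in> (SIGMA a:{..n}. {q. good a q})"
  then show "(case x of (a, q) \<Rightarrow> extp a n q) \<in> {p. good (Suc n) p}"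
    using good_ext by auto
next
  fix p assume "p \<in> {p. good (Suc n) p}"
  then have g: "good (Suc n) p" by simp
  let ?a = "p n" let ?q = "\<lambda>i. if i < p n then p i else i"
  have "(?a, ?q) \<in> (SIGMA a:{..n}. {q. good a q})" using good_struct[OF g] by auto
  moreover have "p = (case (?a, ?q) of (a, q) \<Rightarrow> extp a n q)" using good_struct[OF g] by simp
  ultimately show "\<exists>x\<in>(SIGMA a:{..n}. {q. good a q}). p = (case x of (a, q) \<Rightarrow> extp a n q)" by blast
qed

lemma prod_ext:
  assumes "a \<le> n"
  shows "(\<Prod>i=0..<Suc n. A i (extp a n q i)) =
         (\<Prod>i=0..<a. A i (q i)) * (\<Prod>i=a..<n. A i (Suc i)) * A n a"
proof -
  have "(\<Prod>i=0..<Suc n. A i (extp a n q i)) = (\<Prod>i=0..<n. A i (extp a n q i)) * A n a"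
    by (simp add: prod.atLeast0_lessThan_Suc ext_at_n[OF assms])
  also have "(\<Prod>i=0..<n. A i (extp a n q i)) = (\<Prod>i=0..<a. A i (extp a n q i)) * (\<Prod>i=a..<n. A i (extp a n q i))"
    by (rule prod.atLeastLessThan_concat[symmetric]) (use assms in auto)
  also have "(\<Prod>i=0..<a. A i (extp a n q i)) = (\<Prod>i=0..<a. A i (q i))"
    by (rule prod.cong) (auto simp: extp_def)
  also have "(\<Prod>i=a..<n. A i (extp a n q i)) = (\<Prod>i=a..<n. A i (Suc i))"
    by (rule prod.cong) (auto simp: extp_def)
  finally show ?thesis .
qed

lemma gen_Suc:
  fixes A :: "nat \<Rightarrow> nat \<Rightarrow> 'a::comm_ring_1"
  assumes c: "\<And>a q. a \<le> n \<Longrightarrow> good a q \<Longrightarrow> c (extp a n q) = c q * \<epsilon> ^ (n - a)"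
    and sup: "\<And>i. i < n \<Longrightarrow> A i (Suc i) = s" and es: "\<epsilon> * s = 1"
  shows "gen c A (Suc n) = (\<Sum>a\<le>n. A n a * gen c A a)"
proof -
  define F where "F p = c p * (\<Prod>i=0..<Suc n. A i (p i))" for p
  have "gen c A (Suc n) = (\<Sum>x\<in>(SIGMA a:{..n}. {q. good a q}). F (case x of (a,q) \<Rightarrow> extp a n q))"
    unfolding gen_def F_def[symmetric] by (rule sum.reindex_bij_betw[OF bij_ext, symmetric])
  also have "\<dots> = (\<Sum>a\<le>n. \<Sum>q\<in>{q. good a q}. F (extp a n q))"
    by (subst sum.Sigma) (auto simp: finite_good split_def)
  also have "\<dots> = (\<Sum>a\<le>n. A n a * gen c A a)"
  proof (rule sum.cong[OF refl])
    fix a assume "a \<in> {..n}"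
    then have an: "a \<le> n" by simp
    have pw: "(\<Prod>i=a..<n. A i (Suc i)) = s ^ (n - a)"
    proof -
      have "(\<Prod>i=a..<n. A i (Suc i)) = (\<Prod>i=a..<n. s)" by (rule prod.cong) (auto simp: sup)
      then show ?thesis by simp
    qed
    have "\<epsilon> ^ (n - a) * s ^ (n - a) = 1" by (simp add: power_mult_distrib[symmetric] es)
    note es2 = this
    have "F (extp a n q) = A n a * (c q * (\<Prod>i=0..<a. A i (q i)))" if "good a q" for q
    proof -
      have "F (extp a n q) = c q * (A n a * (\<Prod>i=0..<a. A i (q i))) * (\<epsilon>^(n-a) * s^(n-a))"
        unfolding F_def c[OF an that] prod_ext[OF an] pw by (simp add: algebra_simps)
      then show ?thesis using es2 by (simp add: algebra_simps)
    qed
    then show "(\<Sum>q\<in>{q. good a q}. F (extp a n q)) = A n a * gen c A a"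
      unfolding gen_def sum_distrib_left
      by (intro sum.cong refl) auto
  qed
  finally show ?thesis .
qed

lemma gen_full:
  assumes "\<And>i j. i < n \<Longrightarrow> j < n \<Longrightarrow> Suc i < j \<Longrightarrow> A i j = 0"
  shows "gen c A n = (\<Sum>p\<in>{p. p permutes {0..<n}}. c p * (\<Prod>i=0..<n. A i (p i)))"
  unfolding gen_def
proof (rule sum.mono_neutral_left)
  show "finite {p. p permutes {0..<n}}" by (simp add: finite_permutations)
  show "{p. good n p} \<subseteq> {p. p permutes {0..<n}}" by (auto simp: good_def)
  show "\<forall>p\<in>{p. p permutes {0..<n}} - {p. good n p}. c p * (\<Prod>i = 0..<n. A i (p i)) = 0"
  proof
    fix p assume "p \<in> {p. p permutes {0..<n}} - {p. good n p}"
    then obtain i where p: "p permutes {0..<n}" and i: "i < n" "\<not> p i \<le> Suc i" by (auto simp: good_def)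
    have "p i < n" using permutes_in_image[OF p, of i] i by simp
    then have "A i (p i) = 0" using assms i by simp
    have "(\<Prod>i = 0..<n. A i (p i)) = 0" by (rule prod_zero) (use i \<open>A i (p i) = 0\<close> in auto)
    then show "c p * (\<Prod>i = 0..<n. A i (p i)) = 0" by simp
  qed
qed

lemma gen_cong:
  assumes "\<And>i j. i < n \<Longrightarrow> j < n \<Longrightarrow> A i j = B i j"
  shows "gen c A n = gen c B n"
  unfolding gen_def
proof (intro sum.cong refl arg_cong2[where f="(*)"] prod.cong)
  fix p i assume "p \<in> {p. good n p}" "i \<in> {0..<n}"
  then show "A i (p i) = B i (p i)" using assms permutes_in_image[of p "{0..<n}" i] by (auto simp: good_def)
qed

lemma gen_0: "gen c A 0 = c id"
proof -
  have "{p. good 0 p} = {id}" by (auto simp: good_def)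
  then show ?thesis by (simp add: gen_def)
qed


definition Mc :: "nat \<Rightarrow> (nat \<Rightarrow> nat) \<Rightarrow> 'a::field_char_0" where
  "Mc k \<alpha> = of_nat (fact (\<Sum>j=1..k. \<alpha> j)) / (\<Prod>j=1..k. of_nat (fact (\<alpha> j)))"

definition tp :: "nat \<Rightarrow> (nat \<Rightarrow> 'a::field_char_0) \<Rightarrow> (nat \<Rightarrow> nat) \<Rightarrow> 'a" where
  "tp k t \<alpha> = (\<Prod>j=1..k. t j ^ \<alpha> j)"

definition Qs :: "nat \<Rightarrow> (nat \<Rightarrow> 'a::field_char_0) \<Rightarrow> nat \<Rightarrow> 'a" where
  "Qs k t m = (\<Sum>\<beta>\<in>isobaric_tuples k m. Mc k \<beta> * tp k t \<beta>)"

definition addj :: "(nat \<Rightarrow> nat) \<Rightarrow> nat \<Rightarrow> nat \<Rightarrow> nat" where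
  "addj \<beta> j = (\<lambda>i. \<beta> i + (if i = j then 1 else 0))"

definition subj :: "(nat \<Rightarrow> nat) \<Rightarrow> nat \<Rightarrow> nat \<Rightarrow> nat" where
  "subj \<beta> j = (\<lambda>i. \<beta> i - (if i = j then 1 else 0))"

lemma iso_bound: assumes "\<alpha> \<in> isobaric_tuples k m" "1 \<le> j" "j \<le> k" shows "j * \<alpha> j \<le> m"
proof -
  have "j * \<alpha> j \<le> (\<Sum>i=1..k. i * \<alpha> i)" by (rule member_le_sum) (use assms in auto)
  then show ?thesis using assms by (simp add: isobaric_tuples_def)
qed

lemma finite_iso: "finite (isobaric_tuples k m)"
proof (rule finite_subset)
  show "isobaric_tuples k m \<subseteq> {f. \<forall>x. (x \<in> {1..k} \<longrightarrow> f x \<in> {0..m}) \<and> (x \<notin> {1..k} \<longrightarrow> f x = 0)}"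
  proof (intro subsetI CollectI allI conjI impI)
    fix \<alpha> x assume a: "\<alpha> \<in> isobaric_tuples k m"
    { assume x: "x \<in> {1..k}"
      have xm: "x * \<alpha> x \<le> m" using iso_bound[OF a] x by auto
      have "1 * \<alpha> x \<le> x * \<alpha> x" by (rule mult_le_mono1) (use x in auto)
      then have "\<alpha> x \<le> x * \<alpha> x" by (simp only: mult_1)
      then have "\<alpha> x \<le> m" using xm by (rule le_trans)
      then show "\<alpha> x \<in> {0..m}" by auto }
    { assume "x \<notin> {1..k}" then show "\<alpha> x = 0" using a by (cases "x = 0") (auto simp: isobaric_tuples_def) }
  qed
  show "finite {f. \<forall>x. (x \<in> {1..k} \<longrightarrow> f x \<in> {0..m}) \<and> (x \<notin> {1..k} \<longrightarrow> f x = (0::nat))}"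
    by (rule finite_set_of_finite_funs) auto
qed

lemma iso_0: "isobaric_tuples k 0 = {\<lambda>_. 0}"
proof -
  have "\<alpha> = (\<lambda>_. 0)" if a: "\<alpha> \<in> isobaric_tuples k 0" for \<alpha>
  proof
    fix x show "\<alpha> x = 0"
    proof (cases "x \<in> {1..k}")
      case True then show ?thesis using iso_bound[OF a, of x] by auto
    next
      case False then show ?thesis using a by (cases "x = 0") (auto simp: isobaric_tuples_def)
    qed
  qed
  moreover have "(\<lambda>_. 0) \<in> isobaric_tuples k 0" by (auto simp: isobaric_tuples_def)
  ultimately show ?thesis by blast
qed

lemma Qs_0: "Qs k t 0 = 1"
  by (simp add: Qs_def iso_0 Mc_def tp_def)

lemma iso_big: assumes "\<alpha> \<in> isobaric_tuples k m" "1 \<le> j" "m < j" shows "\<alpha> j = 0"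
proof (cases "j \<le> k")
  case True
  then have "j * \<alpha> j \<le> m" using iso_bound[OF assms(1,2)] by auto
  show ?thesis
  proof (rule ccontr)
    assume "\<alpha> j \<noteq> 0"
    then have "j * 1 \<le> j * \<alpha> j" by (intro mult_le_mono2) simp
    then have "j \<le> j * \<alpha> j" by (simp only: mult_1_right)
    then show False using \<open>j * \<alpha> j \<le> m\<close> assms(3) by linarith
  qed
next
  case False then show ?thesis using assms by (auto simp: isobaric_tuples_def)
qed

lemma wsum_addj: assumes "j \<in> {1..k}"
  shows "(\<Sum>i=1..k. i * addj \<beta> j i) = (\<Sum>i=1..k. i * \<beta> i) + j"
proof -
  have "(\<Sum>i=1..k. i * addj \<beta> j i) = (\<Sum>i=1..k. i * \<beta> i) + (\<Sum>i=1..k. if i = j then i else 0)"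
  proof -
    have "(\<Sum>i=1..k. i * addj \<beta> j i) = (\<Sum>i=1..k. i * \<beta> i + (if i = j then i else 0))"
      by (rule sum.cong) (auto simp: addj_def)
    then show ?thesis by (simp add: sum.distrib)
  qed
  also have "(\<Sum>i=1..k. if i = j then i else 0) = j" using assms by (simp add: sum.delta)
  finally show ?thesis .
qed

lemma sum_addj: assumes "j \<in> {1..k}"
  shows "(\<Sum>i=1..k. addj \<beta> j i) = (\<Sum>i=1..k. \<beta> i) + 1"
proof -
  have "(\<Sum>i=1..k. addj \<beta> j i) = (\<Sum>i=1..k. \<beta> i) + (\<Sum>i=1..k. if i = j then 1 else 0)"
    by (simp add: addj_def sum.distrib)
  also have "(\<Sum>i=1..k. if i = j then (1::nat) else 0) = 1" using assms by (simp add: sum.delta)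
  finally show ?thesis .
qed

lemma tp_addj: assumes "j \<in> {1..k}" shows "tp k t (addj \<beta> j) = t j * tp k t \<beta>"
proof -
  have "tp k t (addj \<beta> j) = (\<Prod>i=1..k. t i ^ \<beta> i * (if i = j then t i else 1))"
    unfolding tp_def addj_def by (intro prod.cong refl) (simp add: power_add)
  also have "\<dots> = tp k t \<beta> * (\<Prod>i=1..k. if i = j then t i else 1)"
    by (simp add: prod.distrib tp_def)
  also have "(\<Prod>i=1..k. if i = j then t i else 1) = t j" using assms by (simp add: prod.delta)
  finally show ?thesis by simp
qed

lemma Mc_addj: assumes "j \<in> {1..k}"
  shows "Mc k (addj \<beta> j) * of_nat (Suc (\<beta> j)) = of_nat (Suc (\<Sum>i=1..k. \<beta> i)) * (Mc k \<beta> :: 'a::field_char_0)"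
proof -
  define P :: 'a where "P = (\<Prod>i=1..k. of_nat (fact (\<beta> i)))"
  have P0: "P \<noteq> 0" unfolding P_def by (simp add: prod_zero_iff)
  have "(\<Prod>i=1..k. of_nat (fact (addj \<beta> j i)) :: 'a) = (\<Prod>i=1..k. of_nat (fact (\<beta> i)) * (if i = j then of_nat (Suc (\<beta> i)) else 1))"
    unfolding addj_def by (intro prod.cong refl) (simp add: algebra_simps)
  also have "\<dots> = P * (\<Prod>i=1..k. if i = j then of_nat (Suc (\<beta> i)) else 1)"
    by (simp add: prod.distrib P_def)
  also have "(\<Prod>i=1..k. if i = j then of_nat (Suc (\<beta> i)) else (1::'a)) = of_nat (Suc (\<beta> j))"
    using assms by (simp add: prod.delta)
  finally have pr: "(\<Prod>i=1..k. of_nat (fact (addj \<beta> j i)) :: 'a) = P * of_nat (Suc (\<beta> j))" .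
  define S where "S = (\<Sum>i=1..k. \<beta> i)"
  have f: "(of_nat (fact (S + 1)) :: 'a) = of_nat (Suc S) * of_nat (fact S)"
    by (simp add: algebra_simps)
  have "(of_nat (Suc (\<beta> j)) :: 'a) \<noteq> 0" by (simp only: of_nat_eq_0_iff)
  then show ?thesis
    unfolding Mc_def sum_addj[OF assms] pr P_def[symmetric] S_def[symmetric] f
    using P0 by (simp add: field_simps del: of_nat_Suc)
qed

lemma addj_in: assumes "j \<in> {1..k}" "j \<le> m" "\<beta> \<in> isobaric_tuples k (m - j)"
  shows "addj \<beta> j \<in> isobaric_tuples k m"
  using assms wsum_addj[OF assms(1), of \<beta>] by (auto simp: isobaric_tuples_def addj_def)

lemma addj_subj: "1 \<le> \<alpha> j \<Longrightarrow> addj (subj \<alpha> j) j = \<alpha>"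
  by (rule ext) (auto simp: addj_def subj_def)

lemma subj_addj: "subj (addj \<alpha> j) j = \<alpha>"
  by (rule ext) (auto simp: addj_def subj_def)

lemma subj_in: assumes "j \<in> {1..k}" "\<alpha> \<in> isobaric_tuples k m" "1 \<le> \<alpha> j"
  shows "subj \<alpha> j \<in> isobaric_tuples k (m - j)"
proof -
  have "m = (\<Sum>i=1..k. i * addj (subj \<alpha> j) j i)" using assms addj_subj[of \<alpha> j, OF assms(3)] by (simp add: isobaric_tuples_def)
  also have "\<dots> = (\<Sum>i=1..k. i * subj \<alpha> j i) + j" by (rule wsum_addj[OF assms(1)])
  finally have "(\<Sum>i=1..k. i * subj \<alpha> j i) = m - j" by simp
  then show ?thesis using assms by (auto simp: isobaric_tuples_def subj_def)
qed


lemma term_j: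
  fixes t :: "nat \<Rightarrow> 'a::field_char_0"
  assumes j: "j \<in> {1..k}"
  shows "(if j \<le> m then of_int (\<omega> j) * t j * Qs k t (m - j) else 0) =
    (\<Sum>\<alpha>\<in>isobaric_tuples k m. of_int (\<omega> j) * (Mc k \<alpha> * of_nat (\<alpha> j) / of_nat (\<Sum>i=1..k. \<alpha> i)) * tp k t \<alpha>)"
    (is "_ = (\<Sum>\<alpha>\<in>_. ?G \<alpha>)")
proof (cases "j \<le> m")
  case False
  have "?G \<alpha> = 0" if "\<alpha> \<in> isobaric_tuples k m" for \<alpha>
    using iso_big[OF that, of j] j False by auto
  then have S0: "(\<Sum>\<alpha>\<in>isobaric_tuples k m. ?G \<alpha>) = 0" by (intro sum.neutral) blast
  show ?thesis unfolding if_not_P[OF False] using S0 by (rule sym)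
next
  case True
  have "of_int (\<omega> j) * t j * Qs k t (m - j) = (\<Sum>\<beta>\<in>isobaric_tuples k (m - j). ?G (addj \<beta> j))"
    unfolding Qs_def sum_distrib_left
  proof (rule sum.cong[OF refl])
    fix \<beta> assume "\<beta> \<in> isobaric_tuples k (m - j)"
    have aj: "addj \<beta> j j = Suc (\<beta> j)" by (simp add: addj_def)
    have ne: "(of_nat (Suc (\<Sum>i=1..k. \<beta> i)) :: 'a) \<noteq> 0" by (simp only: of_nat_eq_0_iff)
    have mc: "Mc k (addj \<beta> j) * of_nat (addj \<beta> j j) / of_nat (\<Sum>i=1..k. addj \<beta> j i) = (Mc k \<beta> :: 'a)"
    proof -
      have "Mc k (addj \<beta> j) * of_nat (addj \<beta> j j) = of_nat (Suc (\<Sum>i=1..k. \<beta> i)) * (Mc k \<beta> :: 'a)"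
        unfolding aj by (rule Mc_addj[OF j])
      moreover have "(\<Sum>i=1..k. addj \<beta> j i) = Suc (\<Sum>i=1..k. \<beta> i)" using sum_addj[OF j] by simp
      ultimately show ?thesis using nonzero_mult_div_cancel_left[OF ne, of "Mc k \<beta>"] by (simp only:)
    qed
    have "?G (addj \<beta> j) = of_int (\<omega> j) * Mc k \<beta> * (t j * tp k t \<beta>)"
      by (simp only: mc tp_addj[OF j])
    then show "of_int (\<omega> j) * t j * (Mc k \<beta> * tp k t \<beta>) = ?G (addj \<beta> j)"
      by (simp only: mult_ac)
  qed
  also have "\<dots> = (\<Sum>\<alpha>\<in>{\<alpha>\<in>isobaric_tuples k m. 1 \<le> \<alpha> j}. ?G \<alpha>)"
  proof (rule sum.reindex_bij_witness[where i="\<lambda>\<alpha>. subj \<alpha> j" and j="\<lambda>\<beta>. addj \<beta> j"])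
    fix \<beta> assume "\<beta> \<in> isobaric_tuples k (m - j)"
    then show "subj (addj \<beta> j) j = \<beta>" "addj \<beta> j \<in> {\<alpha>\<in>isobaric_tuples k m. 1 \<le> \<alpha> j}"
      using subj_addj addj_in[OF j True] by (auto simp: addj_def)
  next
    fix \<alpha> assume "\<alpha> \<in> {\<alpha>\<in>isobaric_tuples k m. 1 \<le> \<alpha> j}"
    then show "addj (subj \<alpha> j) j = \<alpha>" "subj \<alpha> j \<in> isobaric_tuples k (m - j)"
      using addj_subj subj_in[OF j] by auto
  qed simp
  also have "\<dots> = (\<Sum>\<alpha>\<in>isobaric_tuples k m. ?G \<alpha>)"
    by (rule sum.mono_neutral_left) (auto simp: finite_iso)
  finally show ?thesis using True by simp
qed

lemma L:
  fixes t :: "nat \<Rightarrow> 'a::field_char_0"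
  shows "weighted_isobaric \<omega> k m t = (\<Sum>j=1..k. if j \<le> m then of_int (\<omega> j) * t j * Qs k t (m - j) else 0)"
proof -
  have "(\<Sum>j=1..k. if j \<le> m then of_int (\<omega> j) * t j * Qs k t (m - j) else 0) =
    (\<Sum>j=1..k. \<Sum>\<alpha>\<in>isobaric_tuples k m. of_int (\<omega> j) * (Mc k \<alpha> * of_nat (\<alpha> j) / of_nat (\<Sum>i=1..k. \<alpha> i)) * tp k t \<alpha>)"
    by (rule sum.cong[OF refl]) (rule term_j, simp)
  also have "\<dots> = (\<Sum>\<alpha>\<in>isobaric_tuples k m. \<Sum>j=1..k. of_int (\<omega> j) * (Mc k \<alpha> * of_nat (\<alpha> j) / of_nat (\<Sum>i=1..k. \<alpha> i)) * tp k t \<alpha>)"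
    by (rule sum.swap)
  also have "\<dots> = weighted_isobaric \<omega> k m t"
    unfolding weighted_isobaric_def Let_def
  proof (rule sum.cong[OF refl])
    fix \<alpha> :: "nat \<Rightarrow> nat"
    show "(\<Sum>j=1..k. of_int (\<omega> j) * (Mc k \<alpha> * of_nat (\<alpha> j) / of_nat (\<Sum>i=1..k. \<alpha> i)) * tp k t \<alpha>) =
      of_nat (fact (\<Sum>j=1..k. \<alpha> j)) / (\<Prod>j=1..k. of_nat (fact (\<alpha> j))) *
        (of_int (\<Sum>j=1..k. \<omega> j * int (\<alpha> j)) / of_nat (\<Sum>j=1..k. \<alpha> j)) * (\<Prod>j=1..k. t j ^ \<alpha> j)"
      unfolding Mc_def[symmetric] tp_def[symmetric] of_int_sum
      by (simp add: sum_divide_distrib sum_distrib_left sum_distrib_right algebra_simps)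
  qed
  finally show ?thesis by simp
qed

lemma Qs_rec:
  fixes t :: "nat \<Rightarrow> 'a::field_char_0"
  assumes "m \<ge> 1"
  shows "Qs k t m = (\<Sum>j=1..k. if j \<le> m then t j * Qs k t (m - j) else 0)"
proof -
  have "Qs k t m = weighted_isobaric (\<lambda>_. 1) k m t"
    unfolding Qs_def weighted_isobaric_def Let_def
  proof (rule sum.cong[OF refl])
    fix \<alpha> assume a: "\<alpha> \<in> isobaric_tuples k m"
    have "(\<Sum>j=1..k. \<alpha> j) \<noteq> 0"
    proof
      assume "(\<Sum>j=1..k. \<alpha> j) = 0"
      then have "\<forall>j\<in>{1..k}. \<alpha> j = 0" by simp
      then have "(\<Sum>j=1..k. j * \<alpha> j) = 0" by simp
      then show False using a assms by (simp add: isobaric_tuples_def)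
    qed
    then have "(of_int (\<Sum>j=1..k. 1 * int (\<alpha> j)) / of_nat (\<Sum>j=1..k. \<alpha> j) :: 'a) = 1"
      by (simp del: of_nat_sum add: of_nat_sum[symmetric])
    then show "Mc k \<alpha> * tp k t \<alpha> = of_nat (fact (\<Sum>j=1..k. \<alpha> j)) / (\<Prod>j=1..k. of_nat (fact (\<alpha> j))) *
        (of_int (\<Sum>j=1..k. 1 * int (\<alpha> j)) / of_nat (\<Sum>j=1..k. \<alpha> j)) * (\<Prod>j=1..k. t j ^ \<alpha> j)"
      by (simp add: Mc_def tp_def)
  qed
  also have "\<dots> = (\<Sum>j=1..k. if j \<le> m then t j * Qs k t (m - j) else 0)"
    unfolding L by (intro sum.cong refl) simp
  finally show ?thesis .
qed

lemma R1:
  fixes g :: "nat \<Rightarrow> 'a::comm_monoid_add"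
  shows "(\<Sum>a\<le>n. g (n - a + 1)) = (\<Sum>j=1..Suc n. g j)"
  by (rule sum.reindex_bij_witness[where i="\<lambda>j. Suc n - j" and j="\<lambda>a. n - a + 1"]) auto

lemma R2:
  fixes g :: "nat \<Rightarrow> 'a::comm_monoid_add"
  assumes "\<And>j. k < j \<Longrightarrow> g j = 0"
  shows "(\<Sum>j=1..N. g j) = (\<Sum>j=1..k. if j \<le> N then g j else 0)"
proof -
  have "(\<Sum>j=1..max N k. if j \<le> N then g j else 0) = (\<Sum>j=1..N. g j)"
    by (rule sum.mono_neutral_cong_right) auto
  moreover have "(\<Sum>j=1..max N k. if j \<le> N then g j else 0) = (\<Sum>j=1..k. if j \<le> N then g j else 0)"
    by (rule sum.mono_neutral_cong_right) (auto simp: assms)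
  ultimately show ?thesis by simp
qed

definition Tf :: "'a \<Rightarrow> (nat \<Rightarrow> 'a) \<Rightarrow> nat \<Rightarrow> nat \<Rightarrow> 'a::comm_ring_1" where
  "Tf s t i j = (if j \<le> i then t (i - j + 1) else if j = Suc i then s else 0)"

definition HF :: "'a::comm_ring_1 \<Rightarrow> (nat \<Rightarrow> int) \<Rightarrow> (nat \<Rightarrow> 'a) \<Rightarrow> nat \<Rightarrow> nat \<Rightarrow> nat \<Rightarrow> 'a" where
  "HF s \<omega> t N i j = (let i' = i + 1; j' = j + 1 in
     if i' < N then
       (if j' \<le> i' then t (i' - j' + 1) else if j' = i' + 1 then s else 0)
     else of_int (\<omega> (N - j' + 1)) * t (N - j' + 1))"

lemma hess_entry: "i < N \<Longrightarrow> j < N \<Longrightarrow> hess_mat s \<omega> t N $$ (i, j) = HF s \<omega> t N i j"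
  by (simp add: hess_mat_def HF_def)

lemma hess_dim: "dim_row (hess_mat s \<omega> t N) = N" "dim_col (hess_mat s \<omega> t N) = N"
  by (simp_all add: hess_mat_def)

lemma HF_hess: "i < N \<Longrightarrow> j < N \<Longrightarrow> Suc i < j \<Longrightarrow> HF s \<omega> t N i j = 0"
  by (auto simp: HF_def Let_def)

lemma toep:
  fixes t :: "nat \<Rightarrow> 'a::field_char_0"
  assumes c: "\<And>n a q. a \<le> n \<Longrightarrow> good a q \<Longrightarrow> c (extp a n q) = c q * \<epsilon> ^ (n - a)"
    and es: "\<epsilon> * s = 1" and cid: "c id = 1"
    and tk: "\<forall>j>k. t j = 0"
  shows "gen c (Tf s t) m = Qs k t m"
proof (induction m rule: less_induct)
  case (less m)
  show ?case
  proof (cases m)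
    case 0
    then show ?thesis by (simp add: gen_0 cid Qs_0)
  next
    case (Suc n)
    have "gen c (Tf s t) (Suc n) = (\<Sum>a\<le>n. Tf s t n a * gen c (Tf s t) a)"
      by (rule gen_Suc[where \<epsilon>=\<epsilon> and s=s]) (auto simp: c es Tf_def)
    also have "\<dots> = (\<Sum>a\<le>n. t (n - a + 1) * Qs k t (Suc n - (n - a + 1)))"
      by (intro sum.cong refl) (auto simp: Tf_def less.IH Suc Suc_diff_le)
    also have "\<dots> = (\<Sum>j=1..Suc n. t j * Qs k t (Suc n - j))"
      by (rule R1[where g="\<lambda>j. t j * Qs k t (Suc n - j)"])
    also have "\<dots> = (\<Sum>j=1..k. if j \<le> Suc n then t j * Qs k t (Suc n - j) else 0)"
      by (rule R2) (simp add: tk)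
    also have "\<dots> = Qs k t (Suc n)" by (rule Qs_rec[symmetric]) simp
    finally show ?thesis using Suc by simp
  qed
qed

lemma hessgen:
  fixes t :: "nat \<Rightarrow> 'a::field_char_0"
  assumes c: "\<And>n a q. a \<le> n \<Longrightarrow> good a q \<Longrightarrow> c (extp a n q) = c q * \<epsilon> ^ (n - a)"
    and es: "\<epsilon> * s = 1" and cid: "c id = 1"
    and tk: "\<forall>j>k. t j = 0"
  shows "gen c (HF s \<omega> t (Suc n)) (Suc n) = weighted_isobaric \<omega> k (Suc n) t"
proof -
  have "gen c (HF s \<omega> t (Suc n)) (Suc n) = (\<Sum>a\<le>n. HF s \<omega> t (Suc n) n a * gen c (HF s \<omega> t (Suc n)) a)"
    by (rule gen_Suc[where \<epsilon>=\<epsilon> and s=s]) (auto simp: c es HF_def Let_def)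
  also have "\<dots> = (\<Sum>a\<le>n. of_int (\<omega> (n - a + 1)) * t (n - a + 1) * Qs k t (Suc n - (n - a + 1)))"
  proof (intro sum.cong refl)
    fix a assume "a \<in> {..n}"
    then have an: "a \<le> n" by simp
    have "gen c (HF s \<omega> t (Suc n)) a = gen c (Tf s t) a"
      by (rule gen_cong) (use an in \<open>auto simp: HF_def Tf_def Let_def\<close>)
    also have "\<dots> = Qs k t a" by (rule toep[OF c es cid tk])
    finally show "HF s \<omega> t (Suc n) n a * gen c (HF s \<omega> t (Suc n)) a =
      of_int (\<omega> (n - a + 1)) * t (n - a + 1) * Qs k t (Suc n - (n - a + 1))"
      using an by (simp add: HF_def Let_def Suc_diff_le)
  qed
  also have "\<dots> = (\<Sum>j=1..Suc n. of_int (\<omega> j) * t j * Qs k t (Suc n - j))"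
    by (rule R1[where g="\<lambda>j. of_int (\<omega> j) * t j * Qs k t (Suc n - j)"])
  also have "\<dots> = (\<Sum>j=1..k. if j \<le> Suc n then of_int (\<omega> j) * t j * Qs k t (Suc n - j) else 0)"
    by (rule R2) (simp add: tk)
  also have "\<dots> = weighted_isobaric \<omega> k (Suc n) t" by (rule L[symmetric])
  finally show ?thesis .
qed

theorem theorem14:
  fixes k n :: nat and \<omega> :: "nat \<Rightarrow> int" and t :: "nat \<Rightarrow> 'a::field_char_0"
  assumes "k \<ge> 1" and "n \<ge> 1"
    and "\<forall>j>k. t j = 0"
  shows "perm_mat (hess_mat 1 \<omega> t n) = weighted_isobaric \<omega> k n t \<and>
         det (hess_mat (-1) \<omega> t n) = weighted_isobaric \<omega> k n t"
proof -
  obtain m where n: "n = Suc m" using assms(2) by (cases n) auto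
  have "perm_mat (hess_mat 1 \<omega> t n) = (\<Sum>p\<in>{p. p permutes {0..<n}}. (\<lambda>_. 1) p * (\<Prod>i=0..<n. HF 1 \<omega> t n i (p i)))"
    unfolding perm_mat_def hess_dim
  proof (intro sum.cong refl)
    fix p assume "p \<in> {p. p permutes {0..<n}}"
    then have "\<And>i. i < n \<Longrightarrow> p i < n" using permutes_in_image[of p "{0..<n}"] by auto
    then show "(\<Prod>i=0..<n. hess_mat 1 \<omega> t n $$ (i, p i)) = (\<lambda>_. 1) p * (\<Prod>i=0..<n. HF 1 \<omega> t n i (p i))"
      by (simp add: hess_entry)
  qed
  also have "\<dots> = gen (\<lambda>_. 1) (HF 1 \<omega> t n) n"
    by (rule gen_full[symmetric]) (rule HF_hess)
  also have "\<dots> = weighted_isobaric \<omega> k n t"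
    unfolding n by (rule hessgen[where \<epsilon>=1]) (use assms(3) in auto)
  finally have P: "perm_mat (hess_mat 1 \<omega> t n) = weighted_isobaric \<omega> k n t" .
  have "det (hess_mat (-1) \<omega> t n) = (\<Sum>p\<in>{p. p permutes {0..<n}}. signof p * (\<Prod>i=0..<n. HF (-1) \<omega> t n i (p i)))"
    unfolding det_def hess_dim
  proof (simp only: if_True refl, intro sum.cong refl)
    fix p assume "p \<in> {p. p permutes {0..<n}}"
    then have "\<And>i. i < n \<Longrightarrow> p i < n" using permutes_in_image[of p "{0..<n}"] by auto
    then show "signof p * (\<Prod>i=0..<n. hess_mat (-1) \<omega> t n $$ (i, p i)) = signof p * (\<Prod>i=0..<n. HF (-1) \<omega> t n i (p i))"
      by (simp add: hess_entry)
  qed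
  also have "\<dots> = gen (\<lambda>p. signof p) (HF (-1) \<omega> t n) n"
    by (rule gen_full[symmetric]) (rule HF_hess)
  also have "\<dots> = weighted_isobaric \<omega> k n t"
    unfolding n
  proof (rule hessgen[where \<epsilon>="-1"])
    fix n' a q assume "a \<le> n'" "good a q"
    then show "(signof (extp a n' q) :: 'a) = signof q * (-1) ^ (n' - a)"
      by (simp add: sign_ext)
  qed (use assms(3) in auto)
  finally show ?thesis using P by simp
qed

end
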